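(* For all positive integers $n\geq 2$ and $t$, the double Roman domination number of $S(K_n,t)$ is $$\gamma_{dR}(S(K_n,t))=\begin{cases}3\left\lceil\frac{n^t}{n+1}\right\rceil & \text{if } t \text{ is odd},\\[2pt] 3\left\lceil\frac{n^t}{n+1}\right\rceil-1 & \text{if } t \text{ is even}.\end{cases}$$
   Context: For a positive integer $n$ let $[n]=\{1,\dots,n\}$. For positive integers $n,t$, the Sierpiński graph $S(K_n,t)$ is the simple graph with vertex set $[n]^t$ (words $v_1v_2\cdots v_t$ with $v_i\in[n]$), in which $u_1\cdots u_t$ and $v_1\cdots v_t$ are adjacent if and only if there is $s\in[t]$ with $u_j=v_j$ for all $j<s$, $u_s\neq v_s$, and $u_j=v_s$ and $v_j=u_s$ for all $j>s$. A double Roman dominating function on a graph $G=(V,E)$ is a function $f:V\to\{0,1,2,3\}$ such that (i) every vertex $u$ with $f(u)=0$ has either a neighbor $v$ with $f(v)=3$ or two distinct neighbors $w,x$ with $f(w)=f(x)=2$, and (ii) every vertex $u$ with $f(u)=1$ has a neighbor $v$ with $f(v)\geq 3$. Its weight is $\sum_{v\in V}f(v)$, and the double Roman domination number $\gamma_{dR}(G)$ is the minimum weight of a double Roman dominating function on $G$. *)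

theory Defs
  imports Complex_Main
begin

(* Vertex set of the Sierpinski graph S(K_n,t): words of length t over [n] = {1..n},
   represented as lists (position i of the list is letter v_(i+1)). *)
definition sierp_vertices :: "nat \<Rightarrow> nat \<Rightarrow> nat list set" where
  "sierp_vertices n t = {v. length v = t \<and> set v \<subseteq> {1..n}}"

definition sierp_adj :: "nat \<Rightarrow> nat \<Rightarrow> nat list \<Rightarrow> nat list \<Rightarrow> bool" where
  "sierp_adj n t u v \<longleftrightarrow>
     u \<in> sierp_vertices n t \<and> v \<in> sierp_vertices n t \<and>
     (\<exists>s<t. (\<forall>j<s. u ! j = v ! j) \<and> u ! s \<noteq> v ! s \<and>
            (\<forall>j. s < j \<and> j < t \<longrightarrow> u ! j = v ! s \<and> v ! j = u ! s))"

definition is_drdf :: "'a set \<Rightarrow> ('a \<Rightarrow> 'a \<Rightarrow> bool) \<Rightarrow> ('a \<Rightarrow> nat) \<Rightarrow> bool" where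
  "is_drdf V E f \<longleftrightarrow>
     (\<forall>v\<in>V. f v \<le> 3) \<and>
     (\<forall>u\<in>V. f u = 0 \<longrightarrow>
        (\<exists>v\<in>V. E u v \<and> f v = 3) \<or>
        (\<exists>w\<in>V. \<exists>x\<in>V. w \<noteq> x \<and> E u w \<and> E u x \<and> f w = 2 \<and> f x = 2)) \<and>
     (\<forall>u\<in>V. f u = 1 \<longrightarrow> (\<exists>v\<in>V. E u v \<and> f v \<ge> 3))"

definition drdf_weight :: "'a set \<Rightarrow> ('a \<Rightarrow> nat) \<Rightarrow> nat" where
  "drdf_weight V f = (\<Sum>v\<in>V. f v)"

definition gamma_dR :: "'a set \<Rightarrow> ('a \<Rightarrow> 'a \<Rightarrow> bool) \<Rightarrow> nat" where
  "gamma_dR V E = Min {drdf_weight V f | f. is_drdf V E f}"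

end

theory Submission
  imports Defs
begin

lemma V_Cons[simp]: "(a # u \<in> sierp_vertices n (Suc t)) \<longleftrightarrow> a \<in> {1..n} \<and> u \<in> sierp_vertices n t"
  by (auto simp: sierp_vertices_def)

lemma V_Suc_cases: "v \<in> sierp_vertices n (Suc t) \<Longrightarrow> \<exists>a u. v = a # u"
  by (cases v) (auto simp: sierp_vertices_def)

lemma V_0: "sierp_vertices n 0 = {[]}" by (auto simp: sierp_vertices_def)

lemma len_V: "u \<in> sierp_vertices n t \<Longrightarrow> length u = t"
  by (auto simp: sierp_vertices_def)

lemma finite_V: "finite (sierp_vertices n t)"
  unfolding sierp_vertices_def using finite_lists_length_eq[of "{1..n}" t]
  by (simp add: conj_commute)

lemma card_V: "card (sierp_vertices n t) = n ^ t"
  unfolding sierp_vertices_def using card_lists_length_eq[of "{1..n}" t]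
  by (simp add: conj_commute)

lemma adj_sym: "sierp_adj n t u v \<Longrightarrow> sierp_adj n t v u"
  unfolding sierp_adj_def by (metis (no_types, opaque_lifting))

lemma adj_irrefl: "\<not> sierp_adj n t u u" by (auto simp: sierp_adj_def)

lemma adj_V: "sierp_adj n t u v \<Longrightarrow> u \<in> sierp_vertices n t \<and> v \<in> sierp_vertices n t"
  by (auto simp: sierp_adj_def)

lemma adj_0: "\<not> sierp_adj n 0 u v" by (auto simp: sierp_adj_def)

lemma adj_Cons: "sierp_adj n (Suc t) (a # u) (b # v) \<longleftrightarrow>
   a \<in> {1..n} \<and> b \<in> {1..n} \<and> u \<in> sierp_vertices n t \<and> v \<in> sierp_vertices n t \<and>
   (a = b \<and> sierp_adj n t u v \<or> a \<noteq> b \<and> u = replicate t b \<and> v = replicate t a)"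
proof
  assume H: "sierp_adj n (Suc t) (a # u) (b # v)"
  then have vs: "a \<in> {1..n}" "b \<in> {1..n}" "u \<in> sierp_vertices n t" "v \<in> sierp_vertices n t"
    by (auto simp: sierp_adj_def)
  from H obtain s where s: "s < Suc t" "\<forall>j<s. (a#u) ! j = (b#v) ! j" "(a#u) ! s \<noteq> (b#v) ! s"
     "\<forall>j. s < j \<and> j < Suc t \<longrightarrow> (a#u) ! j = (b#v) ! s \<and> (b#v) ! j = (a#u) ! s"
    unfolding sierp_adj_def by blast
  have lu: "length u = t" "length v = t" using vs by (auto simp: sierp_vertices_def)
  have "a = b \<and> sierp_adj n t u v \<or> a \<noteq> b \<and> u = replicate t b \<and> v = replicate t a"
  proof (cases s)
    case 0
    then have "a \<noteq> b" using s by simp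
    moreover have "u = replicate t b"
    proof (rule nth_equalityI)
      show "length u = length (replicate t b)" using lu by simp
      fix i assume "i < length u"
      then show "u ! i = replicate t b ! i" using s(4)[rule_format, of "Suc i"] 0 lu by simp
    qed
    moreover have "v = replicate t a"
    proof (rule nth_equalityI)
      show "length v = length (replicate t a)" using lu by simp
      fix i assume "i < length v"
      then show "v ! i = replicate t a ! i" using s(4)[rule_format, of "Suc i"] 0 lu by simp
    qed
    ultimately show ?thesis by blast
  next
    case (Suc s')
    then have "a = b" using s(2)[rule_format, of 0] by simp
    moreover have "sierp_adj n t u v"
      unfolding sierp_adj_def
    proof (intro conjI exI[of _ s'])
      show "u \<in> sierp_vertices n t" "v \<in> sierp_vertices n t" by fact+
      show "s' < t" using s(1) Suc by simp
      show "\<forall>j<s'. u ! j = v ! j" using s(2) Suc by auto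
      show "u ! s' \<noteq> v ! s'" using s(3) Suc by simp
      show "\<forall>j. s' < j \<and> j < t \<longrightarrow> u ! j = v ! s' \<and> v ! j = u ! s'"
      proof (intro allI impI)
        fix j assume "s' < j \<and> j < t"
        then show "u ! j = v ! s' \<and> v ! j = u ! s'" using s(4)[rule_format, of "Suc j"] Suc by simp
      qed
    qed
    ultimately show ?thesis by blast
  qed
  then show "a \<in> {1..n} \<and> b \<in> {1..n} \<and> u \<in> sierp_vertices n t \<and> v \<in> sierp_vertices n t \<and>
   (a = b \<and> sierp_adj n t u v \<or> a \<noteq> b \<and> u = replicate t b \<and> v = replicate t a)"
    using vs by blast
next
  assume H: "a \<in> {1..n} \<and> b \<in> {1..n} \<and> u \<in> sierp_vertices n t \<and> v \<in> sierp_vertices n t \<and>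
   (a = b \<and> sierp_adj n t u v \<or> a \<noteq> b \<and> u = replicate t b \<and> v = replicate t a)"
  then have vs: "a \<in> {1..n}" "b \<in> {1..n}" "u \<in> sierp_vertices n t" "v \<in> sierp_vertices n t"
    by auto
  have lu: "length u = t" "length v = t" using vs by (auto simp: sierp_vertices_def)
  from H consider "a = b" "sierp_adj n t u v" | "a \<noteq> b" "u = replicate t b" "v = replicate t a"
    by blast
  then show "sierp_adj n (Suc t) (a # u) (b # v)"
  proof cases
    case 1
    then obtain s where s: "s < t" "\<forall>j<s. u ! j = v ! j" "u ! s \<noteq> v ! s"
     "\<forall>j. s < j \<and> j < t \<longrightarrow> u ! j = v ! s \<and> v ! j = u ! s"
      unfolding sierp_adj_def by blast
    show ?thesis unfolding sierp_adj_def
    proof (intro conjI exI[of _ "Suc s"])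
      show "a # u \<in> sierp_vertices n (Suc t)" "b # v \<in> sierp_vertices n (Suc t)" using vs by auto
      show "Suc s < Suc t" using s by simp
      show "\<forall>j<Suc s. (a # u) ! j = (b # v) ! j" using s(2) 1 by (auto simp: less_Suc_eq_0_disj)
      show "(a # u) ! Suc s \<noteq> (b # v) ! Suc s" using s(3) by simp
      show "\<forall>j. Suc s < j \<and> j < Suc t \<longrightarrow> (a # u) ! j = (b # v) ! Suc s \<and> (b # v) ! j = (a # u) ! Suc s"
      proof (intro allI impI)
        fix j assume j: "Suc s < j \<and> j < Suc t"
        then obtain j' where "j = Suc j'" by (cases j) auto
        then show "(a # u) ! j = (b # v) ! Suc s \<and> (b # v) ! j = (a # u) ! Suc s"
          using s(4) j by auto
      qed
    qed
  next
    case 2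
    show ?thesis unfolding sierp_adj_def
    proof (intro conjI exI[of _ 0])
      show "a # u \<in> sierp_vertices n (Suc t)" "b # v \<in> sierp_vertices n (Suc t)" using vs by auto
      show "0 < Suc t" by simp
      show "\<forall>j<0. (a # u) ! j = (b # v) ! j" by simp
      show "(a # u) ! 0 \<noteq> (b # v) ! 0" using 2 by simp
      show "\<forall>j. 0 < j \<and> j < Suc t \<longrightarrow> (a # u) ! j = (b # v) ! 0 \<and> (b # v) ! j = (a # u) ! 0"
      proof (intro allI impI)
        fix j assume j: "0 < j \<and> j < Suc t"
        then obtain j' where "j = Suc j'" by (cases j) auto
        then show "(a # u) ! j = (b # v) ! 0 \<and> (b # v) ! j = (a # u) ! 0"
          using 2 j by auto
      qed
    qed
  qed
qed


definition nbrs :: "nat \<Rightarrow> nat \<Rightarrow> nat list \<Rightarrow> nat list set" where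
  "nbrs n t u = {v. sierp_adj n t u v}"

lemma nbrs_V: "nbrs n t u \<subseteq> sierp_vertices n t"
  using adj_V by (auto simp: nbrs_def)

lemma finite_nbrs[simp]: "finite (nbrs n t u)"
  using finite_subset[OF nbrs_V finite_V] .

lemma rep_inj: "t \<ge> 1 \<Longrightarrow> replicate t a = replicate t b \<Longrightarrow> a = b"
  by (cases t) auto

lemma nbrs_Cons_sub: "nbrs n (Suc t) (a # u) \<subseteq> Cons a ` nbrs n t u \<union>
   (\<lambda>b. b # replicate t a) ` {b\<in>{1..n}. b \<noteq> a \<and> u = replicate t b}"
proof
  fix w assume "w \<in> nbrs n (Suc t) (a # u)"
  then have w: "sierp_adj n (Suc t) (a # u) w" by (simp add: nbrs_def)
  then obtain b v where wv: "w = b # v" using adj_V V_Suc_cases by blast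
  show "w \<in> Cons a ` nbrs n t u \<union> (\<lambda>b. b # replicate t a) ` {b\<in>{1..n}. b \<noteq> a \<and> u = replicate t b}"
    using w unfolding wv adj_Cons by (auto simp: nbrs_def)
qed

lemma deg_le: "n \<ge> 1 \<Longrightarrow> u \<in> sierp_vertices n t \<Longrightarrow>
   card (nbrs n t u) \<le> n \<and> (\<forall>c. u = replicate t c \<longrightarrow> card (nbrs n t u) \<le> n - 1)"
proof (induction t arbitrary: u)
  case 0
  then show ?case by (simp add: nbrs_def adj_0)
next
  case (Suc t)
  obtain a u' where u: "u = a # u'" using Suc.prems V_Suc_cases by blast
  have a: "a \<in> {1..n}" and u': "u' \<in> sierp_vertices n t" using Suc.prems u by auto
  let ?X = "{b\<in>{1..n}. b \<noteq> a \<and> u' = replicate t b}"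
  have sub: "nbrs n (Suc t) u \<subseteq> Cons a ` nbrs n t u' \<union> (\<lambda>b. b # replicate t a) ` ?X"
    using nbrs_Cons_sub u by simp
  have cle: "card (nbrs n (Suc t) u) \<le> card (nbrs n t u') + card ?X"
  proof -
    have "card (nbrs n (Suc t) u) \<le> card (Cons a ` nbrs n t u' \<union> (\<lambda>b. b # replicate t a) ` ?X)"
      by (rule card_mono[OF _ sub]) auto
    also have "\<dots> \<le> card (Cons a ` nbrs n t u') + card ((\<lambda>b. b # replicate t a) ` ?X)"
      by (rule card_Un_le)
    also have "\<dots> \<le> card (nbrs n t u') + card ?X"
      by (intro add_mono card_image_le) auto
    finally show ?thesis .
  qed
  show ?case
  proof (cases "t = 0")
    case True
    then have "nbrs n t u' = {}" by (simp add: nbrs_def adj_0)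
    moreover have "card ?X \<le> n - 1"
    proof -
      have "?X \<subseteq> {1..n} - {a}" by auto
      then have "card ?X \<le> card ({1..n} - {a})" by (intro card_mono) auto
      also have "\<dots> = n - 1" using a by simp
      finally show ?thesis .
    qed
    ultimately show ?thesis using cle by auto
  next
    case False
    then have t1: "t \<ge> 1" by simp
    note IH = Suc.IH[OF Suc.prems(1) u']
    show ?thesis
    proof (cases "u' = replicate t a")
      case True
      then have X0: "?X = {}" using rep_inj[OF t1] t1 by auto
      have "card (nbrs n (Suc t) u) \<le> n - 1" using cle IH True unfolding X0 by simp
      then show ?thesis by auto
    next
      case False
      then have nr: "\<forall>c. u \<noteq> replicate (Suc t) c" using u by auto
      have "card ?X \<le> 1"
      proof -
        have "?X \<subseteq> {u' ! 0}" using t1 by auto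
        then show ?thesis using card_mono[of "{u' ! 0}" ?X] by auto
      qed
      moreover have "card (nbrs n t u') + card ?X \<le> n"
      proof (cases "\<exists>c. u' = replicate t c")
        case True
        then show ?thesis using IH \<open>card ?X \<le> 1\<close> Suc.prems(1) by auto
      next
        case False
        then have X0: "?X = {}" by auto
        show ?thesis using IH unfolding X0 by simp
      qed
      ultimately show ?thesis using cle nr by auto
    qed
  qed
qed

lemma deg_ge: "t \<ge> 1 \<Longrightarrow> u \<in> sierp_vertices n t \<Longrightarrow> card (nbrs n t u) \<ge> n - 1"
proof (induction t arbitrary: u)
  case 0
  then show ?case by simp
next
  case (Suc t)
  obtain a u' where u: "u = a # u'" using Suc.prems V_Suc_cases by blast
  have a: "a \<in> {1..n}" and u': "u' \<in> sierp_vertices n t" using Suc.prems u by auto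
  show ?case
  proof (cases "t = 0")
    case True
    then have u'0: "u' = []" using u' by (simp add: V_0)
    have sub: "(\<lambda>b. [b]) ` ({1..n} - {a}) \<subseteq> nbrs n (Suc t) u"
      using a True u'0 u by (auto simp: nbrs_def adj_Cons V_0)
    have "n - 1 = card ((\<lambda>b. [b]) ` ({1..n} - {a}))"
      using a by (subst card_image) (auto simp: inj_on_def)
    also have "\<dots> \<le> card (nbrs n (Suc t) u)" by (rule card_mono[OF _ sub]) simp
    finally show ?thesis .
  next
    case False
    have sub: "Cons a ` nbrs n t u' \<subseteq> nbrs n (Suc t) u"
      using a u' u by (auto simp: nbrs_def adj_Cons dest: adj_V)
    have "n - 1 \<le> card (nbrs n t u')" using Suc.IH[OF _ u'] False by simp
    also have "\<dots> = card (Cons a ` nbrs n t u')" by (simp add: card_image)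
    also have "\<dots> \<le> card (nbrs n (Suc t) u)" by (rule card_mono[OF _ sub]) simp
    finally show ?thesis .
  qed
qed


lemma no_C4:
  "sierp_adj n t u x \<Longrightarrow> sierp_adj n t x v \<Longrightarrow> sierp_adj n t v y \<Longrightarrow> sierp_adj n t y u
   \<Longrightarrow> x \<noteq> y \<Longrightarrow> u \<noteq> v \<Longrightarrow> sierp_adj n t u v"
proof (induction t arbitrary: u x v y)
  case 0
  then show ?case by (simp add: adj_0)
next
  case (Suc t)
  obtain a u' where u: "u = a # u'" using Suc.prems(1) adj_V V_Suc_cases by blast
  obtain c x' where x: "x = c # x'" using Suc.prems(2) adj_V V_Suc_cases by blast
  obtain b v' where v: "v = b # v'" using Suc.prems(3) adj_V V_Suc_cases by blast
  obtain d y' where y: "y = d # y'" using Suc.prems(4) adj_V V_Suc_cases by blast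
  note H = Suc.prems(1-4)[unfolded u x v y adj_Cons]
  show ?case
  proof (cases "t = 0")
    case True
    have "u' = []" "v' = []" "a \<in> {1..n}" "b \<in> {1..n}" using H True by (auto simp: V_0)
    moreover have "a \<noteq> b" using Suc.prems(6) calculation unfolding u v by simp
    ultimately show ?thesis unfolding u v using True by (simp add: adj_Cons V_0)
  next
    case False
    then have t1: "t \<ge> 1" by simp
    have ri: "\<And>p q. replicate t p = replicate t q \<longleftrightarrow> p = q" using rep_inj[OF t1] by metis
    have ir: "\<And>w. \<not> sierp_adj n (Suc t) w w" by (rule adj_irrefl)
    have e1: "a = c \<and> sierp_adj n t u' x' \<or> a \<noteq> c \<and> u' = replicate t c \<and> x' = replicate t a" using H(1) by blast
    have e2: "c = b \<and> sierp_adj n t x' v' \<or> c \<noteq> b \<and> x' = replicate t b \<and> v' = replicate t c" using H(2) by blast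
    have e3: "b = d \<and> sierp_adj n t v' y' \<or> b \<noteq> d \<and> v' = replicate t d \<and> y' = replicate t b" using H(3) by blast
    have e4: "d = a \<and> sierp_adj n t y' u' \<or> d \<noteq> a \<and> y' = replicate t a \<and> u' = replicate t d" using H(4) by blast
    have xy: "c # x' \<noteq> d # y'" and uv: "a # u' \<noteq> b # v'" using Suc.prems(5,6) unfolding u x v y .
    have ux: "a # u' \<noteq> c # x'" using Suc.prems(1) adj_irrefl unfolding u x by metis
    have xv: "c # x' \<noteq> b # v'" using Suc.prems(2) adj_irrefl unfolding v x by metis
    have ac: "a = c"
    proof (rule ccontr)
      assume ac: "a \<noteq> c"
      with e1 have 1: "u' = replicate t c" "x' = replicate t a" by auto
      have cb: "c = b"
      proof (rule ccontr)
        assume "c \<noteq> b"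
        with e2 have "x' = replicate t b" "v' = replicate t c" by auto
        with 1 ri have "a = b" "u' = v'" by auto
        with uv show False by simp
      qed
      have da: "d = a"
      proof (rule ccontr)
        assume "d \<noteq> a"
        with e4 have "y' = replicate t a" "u' = replicate t d" by auto
        with 1 ri have "d = c" "y' = x'" by auto
        with xy show False by simp
      qed
      from e3 cb da ac have "v' = replicate t a" by auto
      with 1 cb xv show False by simp
    qed
    have cb: "c = b"
    proof (rule ccontr)
      assume cb: "c \<noteq> b"
      with e2 have 2: "x' = replicate t b" "v' = replicate t c" by auto
      have bd: "b = d"
      proof (rule ccontr)
        assume "b \<noteq> d"
        with e3 have "v' = replicate t d" "y' = replicate t b" by auto
        with 2 ri have "c = d" "y' = x'" by auto
        with xy show False by simp
      qed
      from e4 bd cb ac have "u' = replicate t b" by auto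
      with 2 ac ux show False by simp
    qed
    have bd: "b = d"
    proof (rule ccontr)
      assume bd: "b \<noteq> d"
      with e3 have 3: "v' = replicate t d" by auto
      from e4 bd cb ac have "u' = replicate t d" by auto
      with 3 ac cb uv show False by simp
    qed
    have eq: "a = c \<and> c = b \<and> b = d" using ac cb bd by simp
    then have "sierp_adj n t u' v'"
      using Suc.IH[of u' x' v' y'] e1 e2 e3 e4 eq xy uv by auto
    then show ?thesis using H eq unfolding u v by (simp add: adj_Cons)
  qed
qed


lemma rep_V: "c \<in> {1..n} \<Longrightarrow> replicate t c \<in> sierp_vertices n t"
  by (auto simp: sierp_vertices_def)

lemma bridge: "a \<in> {1..n} \<Longrightarrow> c \<in> {1..n} \<Longrightarrow> a \<noteq> c \<Longrightarrow>
  sierp_adj n (Suc t) (a # replicate t c) (c # replicate t a)"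
  by (simp add: adj_Cons rep_V)

lemma closed_ext:
  "H \<subseteq> sierp_vertices n t \<Longrightarrow> (\<forall>x\<in>H. \<forall>y. sierp_adj n t x y \<longrightarrow> y \<in> H) \<Longrightarrow> H \<noteq> {}
   \<Longrightarrow> c \<in> {1..n} \<Longrightarrow> replicate t c \<in> H"
proof (induction t arbitrary: H c)
  case 0
  then show ?case by (auto simp: V_0)
next
  case (Suc t)
  define Hp where "Hp p = {w. p # w \<in> H}" for p
  have Hp_sub: "Hp p \<subseteq> sierp_vertices n t" for p
    using Suc.prems(1) by (auto simp: Hp_def)
  have Hp_cl: "\<forall>x\<in>Hp p. \<forall>y. sierp_adj n t x y \<longrightarrow> y \<in> Hp p" for p
  proof (intro ballI allI impI)
    fix x y assume x: "x \<in> Hp p" and xy: "sierp_adj n t x y"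
    then have "p # x \<in> sierp_vertices n (Suc t)" using Suc.prems(1) by (auto simp: Hp_def)
    then have "sierp_adj n (Suc t) (p # x) (p # y)" using xy adj_V by (auto simp: adj_Cons)
    then show "y \<in> Hp p" using Suc.prems(2) x by (auto simp: Hp_def)
  qed
  have all: "Hp p \<noteq> {} \<Longrightarrow> c' \<in> {1..n} \<Longrightarrow> p # replicate t c' \<in> H" for p c'
    using Suc.IH[OF Hp_sub Hp_cl] by (auto simp: Hp_def)
  obtain w where w: "w \<in> H" using Suc.prems(3) by blast
  then obtain a u where wa: "w = a # u" using Suc.prems(1) V_Suc_cases by blast
  have a: "a \<in> {1..n}" using w wa Suc.prems(1) by auto
  have Ha: "Hp a \<noteq> {}" using w wa by (auto simp: Hp_def)
  show ?case
  proof (cases "c = a")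
    case True
    then show ?thesis using all[OF Ha Suc.prems(4)] by simp
  next
    case False
    have "a # replicate t c \<in> H" using all[OF Ha Suc.prems(4)] .
    then have "c # replicate t a \<in> H"
      using Suc.prems(2) bridge[OF a Suc.prems(4)] False by metis
    then have "Hp c \<noteq> {}" by (auto simp: Hp_def)
    then show ?thesis using all[OF _ Suc.prems(4)] by simp
  qed
qed

fun cd :: "nat \<Rightarrow> bool \<Rightarrow> nat \<Rightarrow> nat \<Rightarrow> nat list set" where
  "cd n True 0 i = {[]}"
| "cd n False 0 i = {}"
| "cd n True (Suc t) i = (if odd t then (\<Union>j\<in>{1..n}. Cons j ` cd n True t j)
      else Cons i ` cd n True t i \<union> (\<Union>j\<in>{1..n}-{i}. Cons j ` cd n False t i))"
| "cd n False (Suc t) i = (if odd t then Cons i ` cd n False t i \<union> (\<Union>l\<in>{1..n}-{i}. Cons l ` cd n True t i)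
      else (\<Union>l\<in>{1..n}. Cons l ` cd n False t l))"

definition dm :: "nat \<Rightarrow> nat \<Rightarrow> nat list set \<Rightarrow> nat list set \<Rightarrow> bool" where
  "dm n t C X \<longleftrightarrow> (\<forall>v\<in>sierp_vertices n t - X. v \<in> C \<or> (\<exists>c\<in>C. sierp_adj n t v c))"

lemma cd_props:
  "\<forall>i\<in>{1..n}.
     (cd n True t i \<subseteq> sierp_vertices n t \<and> dm n t (cd n True t i) {} \<and>
       (if odd t then replicate t i \<in> cd n True t i else (\<forall>j\<in>{1..n}. replicate t j \<in> cd n True t i)))
   \<and> (cd n False t i \<subseteq> sierp_vertices n t \<and>
       dm n t (cd n False t i) (if even t then {replicate t i} else range (\<lambda>j. replicate t j)))"
proof (induction t)
  case 0
  show ?case by (auto simp: dm_def V_0)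
next
  case (Suc t)
  show ?case
  proof (intro ballI conjI)
    fix i assume i: "i \<in> {1..n}"
    have sA: "\<And>j x. j \<in> {1..n} \<Longrightarrow> x \<in> cd n True t j \<Longrightarrow> x \<in> sierp_vertices n t"
      using Suc.IH by blast
    have sB: "\<And>j x. j \<in> {1..n} \<Longrightarrow> x \<in> cd n False t j \<Longrightarrow> x \<in> sierp_vertices n t"
      using Suc.IH by blast
    show "cd n True (Suc t) i \<subseteq> sierp_vertices n (Suc t)" using sA sB i by auto
    show "cd n False (Suc t) i \<subseteq> sierp_vertices n (Suc t)" using sA sB i by auto
    show "if odd (Suc t) then replicate (Suc t) i \<in> cd n True (Suc t) i
          else \<forall>j\<in>{1..n}. replicate (Suc t) j \<in> cd n True (Suc t) i"
    proof (cases "odd t")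
      case True
      have "\<forall>j\<in>{1..n}. replicate (Suc t) j \<in> cd n True (Suc t) i"
      proof
        fix j assume j: "j \<in> {1..n}"
        then have "replicate t j \<in> cd n True t j" using Suc.IH True by auto
        then have "j # replicate t j \<in> Cons j ` cd n True t j" by blast
        then show "replicate (Suc t) j \<in> cd n True (Suc t) i" using True j by auto
      qed
      then show ?thesis using True by simp
    next
      case False
      then have "replicate t i \<in> cd n True t i" using Suc.IH i by auto
      then show ?thesis using False by simp
    qed
    show "dm n (Suc t) (cd n True (Suc t) i) {}"
      unfolding dm_def
    proof
      fix v assume "v \<in> sierp_vertices n (Suc t) - {}"
      then obtain j w where v: "v = j # w" and j: "j \<in> {1..n}" and w: "w \<in> sierp_vertices n t"
        using V_Suc_cases by fastforce
      show "v \<in> cd n True (Suc t) i \<or> (\<exists>c\<in>cd n True (Suc t) i. sierp_adj n (Suc t) v c)"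
      proof (cases "odd t \<or> j = i")
        case True
        then have "w \<in> cd n True t j \<or> (\<exists>c\<in>cd n True t j. sierp_adj n t w c)"
          using Suc.IH j w by (auto simp: dm_def)
        then show ?thesis
        proof
          assume "w \<in> cd n True t j"
          then show ?thesis using True j unfolding v by auto
        next
          assume "\<exists>c\<in>cd n True t j. sierp_adj n t w c"
          then obtain c where c: "c \<in> cd n True t j" "sierp_adj n t w c" by blast
          then have "sierp_adj n (Suc t) (j # w) (j # c)" using j adj_V by (auto simp: adj_Cons)
          moreover have "j # c \<in> cd n True (Suc t) i" using True j c by auto
          ultimately show ?thesis unfolding v by blast
        qed
      next
        case False
        then have ev: "even t" and ji: "j \<noteq> i" by auto
        show ?thesis
        proof (cases "w = replicate t i")
          case True
          have "replicate t j \<in> cd n True t i" using Suc.IH i j ev by auto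
          then have "i # replicate t j \<in> cd n True (Suc t) i" using ev by auto
          moreover have "sierp_adj n (Suc t) v (i # replicate t j)"
            unfolding v True using bridge[OF j i ji] .
          ultimately show ?thesis by blast
        next
          case False
          then have "w \<in> cd n False t i \<or> (\<exists>c\<in>cd n False t i. sierp_adj n t w c)"
            using Suc.IH i w ev by (auto simp: dm_def)
          then show ?thesis
          proof
            assume "w \<in> cd n False t i"
            then show ?thesis using ev ji j unfolding v by auto
          next
            assume "\<exists>c\<in>cd n False t i. sierp_adj n t w c"
            then obtain c where c: "c \<in> cd n False t i" "sierp_adj n t w c" by blast
            then have "sierp_adj n (Suc t) (j # w) (j # c)" using j adj_V by (auto simp: adj_Cons)
            moreover have "j # c \<in> cd n True (Suc t) i" using ev ji j c by auto
            ultimately show ?thesis unfolding v by blast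
          qed
        qed
      qed
    qed
    show "dm n (Suc t) (cd n False (Suc t) i)
       (if even (Suc t) then {replicate (Suc t) i} else range (\<lambda>j. replicate (Suc t) j))"
      unfolding dm_def
    proof
      fix v assume vX: "v \<in> sierp_vertices n (Suc t) -
        (if even (Suc t) then {replicate (Suc t) i} else range (\<lambda>j. replicate (Suc t) j))"
      then obtain j w where v: "v = j # w" and j: "j \<in> {1..n}" and w: "w \<in> sierp_vertices n t"
        using V_Suc_cases by fastforce
      show "v \<in> cd n False (Suc t) i \<or> (\<exists>c\<in>cd n False (Suc t) i. sierp_adj n (Suc t) v c)"
      proof (cases "odd t")
        case od: True
        show ?thesis
        proof (cases "j = i \<and> w \<in> range (\<lambda>j. replicate t j)")
          case True
          then obtain l where l: "w = replicate t l" by blast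
          have t1: "t \<ge> 1" using od by (cases t) auto
          have "l \<in> {1..n}" using w l t1 by (cases t) (auto simp: sierp_vertices_def)
          moreover have "l \<noteq> i" using vX od True l v by auto
          moreover have "replicate t i \<in> cd n True t i" using Suc.IH i od by auto
          ultimately have "l # replicate t i \<in> cd n False (Suc t) i" using od by auto
          moreover have "sierp_adj n (Suc t) v (l # replicate t i)"
            using True l bridge[OF i \<open>l \<in> {1..n}\<close>] \<open>l \<noteq> i\<close> unfolding v by simp
          ultimately show ?thesis by blast
        next
          case False
          let ?f = "j \<noteq> i"
          have dd: "w \<in> cd n ?f t i \<or> (\<exists>c\<in>cd n ?f t i. sierp_adj n t w c)"
          proof (cases "j = i")
            case True
            then show ?thesis using Suc.IH i w od False by (auto simp: dm_def)
          next
            case False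
            then show ?thesis using Suc.IH i w by (auto simp: dm_def)
          qed
          then show ?thesis
          proof
            assume "w \<in> cd n ?f t i"
            then show ?thesis using od j unfolding v by (cases "j = i") auto
          next
            assume "\<exists>c\<in>cd n ?f t i. sierp_adj n t w c"
            then obtain c where c: "c \<in> cd n ?f t i" "sierp_adj n t w c" by blast
            then have "sierp_adj n (Suc t) (j # w) (j # c)" using j adj_V by (auto simp: adj_Cons)
            moreover have "j # c \<in> cd n False (Suc t) i" using od j c by (cases "j = i") auto
            ultimately show ?thesis unfolding v by blast
          qed
        qed
      next
        case ev: False
        have "w \<noteq> replicate t j" using vX ev v by auto
        then have "w \<in> cd n False t j \<or> (\<exists>c\<in>cd n False t j. sierp_adj n t w c)"
          using Suc.IH j w ev by (auto simp: dm_def)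
        then show ?thesis
        proof
          assume "w \<in> cd n False t j"
          then show ?thesis using ev j unfolding v by auto
        next
          assume "\<exists>c\<in>cd n False t j. sierp_adj n t w c"
          then obtain c where c: "c \<in> cd n False t j" "sierp_adj n t w c" by blast
          then have "sierp_adj n (Suc t) (j # w) (j # c)" using j adj_V by (auto simp: adj_Cons)
          moreover have "j # c \<in> cd n False (Suc t) i" using ev j c by auto
          ultimately show ?thesis unfolding v by blast
        qed
      qed
    qed
  qed
qed


lemma card_UN_Cons_le: "finite I \<Longrightarrow> card (\<Union>j\<in>I. Cons j ` S j) \<le> (\<Sum>j\<in>I. card (S j))"
proof -
  assume "finite I"
  then have "card (\<Union>j\<in>I. Cons j ` S j) \<le> (\<Sum>j\<in>I. card (Cons j ` S j))" by (rule card_UN_le)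
  also have "\<dots> = (\<Sum>j\<in>I. card (S j))" by (simp add: card_image)
  finally show ?thesis .
qed

lemma cd_card:
  "\<forall>i\<in>{1..n}.
     int (n+1) * int (card (cd n True t i)) \<le> int n ^ t + (if even t then int n else 1)
   \<and> int (n+1) * int (card (cd n False t i)) \<le> int n ^ t - (if even t then 1 else int n)"
proof (induction t)
  case 0
  show ?case by simp
next
  case (Suc t)
  show ?case
  proof (intro ballI conjI)
    fix i assume i: "i \<in> {1..n}"
    have cni: "card ({1..n} - {i}) = n - 1" using i by simp
    have n1: "n \<ge> 1" using i by simp
    define N where "N = int n ^ t"
    have NS: "int n ^ Suc t = int n * N" by (simp add: N_def)
    have IA: "\<And>j. j \<in> {1..n} \<Longrightarrow> int (n+1) * int (card (cd n True t j)) \<le> N + (if even t then int n else 1)"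
      using Suc.IH by (simp add: N_def)
    have IB: "\<And>j. j \<in> {1..n} \<Longrightarrow> int (n+1) * int (card (cd n False t j)) \<le> N - (if even t then 1 else int n)"
      using Suc.IH by (simp add: N_def)
    show "int (n+1) * int (card (cd n True (Suc t) i)) \<le> int n ^ Suc t + (if even (Suc t) then int n else 1)"
    proof (cases "odd t")
      case True
      have "card (cd n True (Suc t) i) \<le> (\<Sum>j\<in>{1..n}. card (cd n True t j))"
        using True card_UN_Cons_le[of "{1..n}" "\<lambda>j. cd n True t j"] by simp
      then have "int (n+1) * int (card (cd n True (Suc t) i)) \<le> int (n+1) * (\<Sum>j\<in>{1..n}. int (card (cd n True t j)))"
        by (simp add: of_nat_sum[symmetric] del: of_nat_sum)
      also have "\<dots> = (\<Sum>j\<in>{1..n}. int (n+1) * int (card (cd n True t j)))" by (simp add: sum_distrib_left)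
      also have "\<dots> \<le> (\<Sum>j\<in>{1..n}. N + 1)" using IA True by (intro sum_mono) auto
      also have "\<dots> = int n * N + int n" by (simp add: algebra_simps)
      finally show ?thesis using True by (simp add: N_def)
    next
      case False
      have "card (cd n True (Suc t) i) \<le> card (Cons i ` cd n True t i) + card (\<Union>j\<in>{1..n}-{i}. Cons j ` cd n False t i)"
        using False by (simp add: card_Un_le)
      also have "\<dots> \<le> card (cd n True t i) + (\<Sum>j\<in>{1..n}-{i}. card (cd n False t i))"
        by (intro add_mono card_UN_Cons_le) (auto simp: card_image)
      also have "\<dots> = card (cd n True t i) + (n - 1) * card (cd n False t i)" using cni by simp
      finally have c: "int (card (cd n True (Suc t) i)) \<le> int (card (cd n True t i)) + int (n - 1) * int (card (cd n False t i))"
        by (metis of_nat_add of_nat_mult of_nat_le_iff)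
      have a: "int (n+1) * int (card (cd n True t i)) \<le> N + int n" using IA[OF i] False by simp
      have b: "int (n+1) * int (card (cd n False t i)) \<le> N - 1" using IB[OF i] False by simp
      have b2: "int (n - 1) * (int (n+1) * int (card (cd n False t i))) \<le> int (n - 1) * (N - 1)"
        by (rule mult_left_mono[OF b]) simp
      have "int (n+1) * int (card (cd n True (Suc t) i)) \<le> int (n+1) * (int (card (cd n True t i)) + int (n - 1) * int (card (cd n False t i)))"
        by (rule mult_left_mono[OF c]) simp
      also have "\<dots> = int (n+1) * int (card (cd n True t i)) + int (n - 1) * (int (n+1) * int (card (cd n False t i)))"
        by (simp add: algebra_simps)
      also have "\<dots> \<le> (N + int n) + int (n - 1) * (N - 1)" using a b2 by linarith
      also have "\<dots> = int n * N + 1" using n1 by (simp add: of_nat_diff algebra_simps)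
      finally show ?thesis using False by (simp add: N_def)
    qed
    show "int (n+1) * int (card (cd n False (Suc t) i)) \<le> int n ^ Suc t - (if even (Suc t) then 1 else int n)"
    proof (cases "odd t")
      case False
      have "card (cd n False (Suc t) i) \<le> (\<Sum>j\<in>{1..n}. card (cd n False t j))"
        using False card_UN_Cons_le[of "{1..n}" "\<lambda>j. cd n False t j"] by simp
      then have "int (n+1) * int (card (cd n False (Suc t) i)) \<le> int (n+1) * (\<Sum>j\<in>{1..n}. int (card (cd n False t j)))"
        by (simp add: of_nat_sum[symmetric] del: of_nat_sum)
      also have "\<dots> = (\<Sum>j\<in>{1..n}. int (n+1) * int (card (cd n False t j)))" by (simp add: sum_distrib_left)
      also have "\<dots> \<le> (\<Sum>j\<in>{1..n}. N - 1)" using IB False by (intro sum_mono) auto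
      also have "\<dots> = int n * N - int n" by (simp add: algebra_simps)
      finally show ?thesis using False by (simp add: N_def)
    next
      case True
      have "card (cd n False (Suc t) i) \<le> card (Cons i ` cd n False t i) + card (\<Union>j\<in>{1..n}-{i}. Cons j ` cd n True t i)"
        using True by (simp add: card_Un_le)
      also have "\<dots> \<le> card (cd n False t i) + (\<Sum>j\<in>{1..n}-{i}. card (cd n True t i))"
        by (intro add_mono card_UN_Cons_le) (auto simp: card_image)
      also have "\<dots> = card (cd n False t i) + (n - 1) * card (cd n True t i)" using cni by simp
      finally have c: "int (card (cd n False (Suc t) i)) \<le> int (card (cd n False t i)) + int (n - 1) * int (card (cd n True t i))"
        by (metis of_nat_add of_nat_mult of_nat_le_iff)
      have a: "int (n+1) * int (card (cd n True t i)) \<le> N + 1" using IA[OF i] True by simp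
      have b: "int (n+1) * int (card (cd n False t i)) \<le> N - int n" using IB[OF i] True by simp
      have a2: "int (n - 1) * (int (n+1) * int (card (cd n True t i))) \<le> int (n - 1) * (N + 1)"
        by (rule mult_left_mono[OF a]) simp
      have "int (n+1) * int (card (cd n False (Suc t) i)) \<le> int (n+1) * (int (card (cd n False t i)) + int (n - 1) * int (card (cd n True t i)))"
        by (rule mult_left_mono[OF c]) simp
      also have "\<dots> = int (n+1) * int (card (cd n False t i)) + int (n - 1) * (int (n+1) * int (card (cd n True t i)))"
        by (simp add: algebra_simps)
      also have "\<dots> \<le> (N - int n) + int (n - 1) * (N + 1)" using a2 b by linarith
      also have "\<dots> = int n * N - 1" using n1 by (simp add: of_nat_diff algebra_simps)
      finally show ?thesis using True by (simp add: N_def)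
    qed
  qed
qed


lemma sum_ind: "finite S \<Longrightarrow> (\<Sum>x\<in>S. if x \<in> X then (c::nat) else 0) = c * card (S \<inter> X)"
  by (simp add: sum.inter_restrict[symmetric])

locale low =
  fixes n t :: nat and g :: "nat list \<Rightarrow> nat"
  assumes n2: "n \<ge> 2" and t1: "t \<ge> 1"
    and dr: "is_drdf (sierp_vertices n t) (sierp_adj n t) g"
    and no1: "\<forall>v\<in>sierp_vertices n t. g v \<noteq> 1"
begin

abbreviation "VV \<equiv> sierp_vertices n t"
definition "A = {v\<in>VV. g v = 3}"
definition "B = {v\<in>VV. g v = 2}"
abbreviation "N u \<equiv> nbrs n t u"
definition "rc u = 2 * (if u \<in> A \<union> B then 1 else 0) + 2 * card (N u \<inter> A) + card (N u \<inter> B)"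

lemma fin[simp]: "finite VV" "finite A" "finite B" "finite (N u)"
  by (auto simp: A_def B_def finite_V)

lemma AV: "A \<subseteq> VV" and BV: "B \<subseteq> VV" by (auto simp: A_def B_def)

lemma AB: "A \<inter> B = {}" by (auto simp: A_def B_def)

lemma gvals: "v \<in> VV \<Longrightarrow> g v = 0 \<or> g v = 2 \<or> g v = 3"
proof -
  assume v: "v \<in> VV"
  have "g v \<le> 3" "g v \<noteq> 1" using dr no1 v unfolding is_drdf_def by auto
  then show ?thesis by arith
qed

lemma weight: "(\<Sum>v\<in>VV. g v) = 3 * card A + 2 * card B"
proof -
  have "(\<Sum>v\<in>VV. g v) = (\<Sum>v\<in>VV. (if v \<in> A then 3 else 0) + (if v \<in> B then 2 else 0))"
  proof (rule sum.cong)
    fix v assume "v \<in> VV"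
    then show "g v = (if v \<in> A then 3 else 0) + (if v \<in> B then 2 else 0)"
      using gvals[of v] by (auto simp: A_def B_def)
  qed simp
  also have "\<dots> = 3 * card (VV \<inter> A) + 2 * card (VV \<inter> B)"
    by (simp add: sum.distrib sum_ind)
  also have "VV \<inter> A = A" using AV by auto
  also have "VV \<inter> B = B" using BV by auto
  finally show ?thesis .
qed

lemma adjN: "v \<in> N u \<longleftrightarrow> sierp_adj n t u v" by (simp add: nbrs_def)

lemma dcount: "X \<subseteq> VV \<Longrightarrow> (\<Sum>u\<in>VV. card (N u \<inter> X)) = (\<Sum>v\<in>X. card (N v))"
proof -
  assume X: "X \<subseteq> VV"
  have fX: "finite X" using X finite_subset fin(1) by blast
  have "(\<Sum>u\<in>VV. card (N u \<inter> X)) = (\<Sum>u\<in>VV. \<Sum>v\<in>X. if sierp_adj n t u v then 1 else 0)"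
  proof (rule sum.cong)
    fix u
    have "card (N u \<inter> X) = card (X \<inter> N u)" by (simp add: Int_commute)
    also have "\<dots> = (\<Sum>v\<in>X. if v \<in> N u then 1 else 0)" using sum_ind[OF fX, of "N u" 1] by simp
    finally show "card (N u \<inter> X) = (\<Sum>v\<in>X. if sierp_adj n t u v then 1 else 0)" by (simp add: adjN)
  qed simp
  also have "\<dots> = (\<Sum>v\<in>X. \<Sum>u\<in>VV. if sierp_adj n t u v then 1 else 0)" by (rule sum.swap)
  also have "\<dots> = (\<Sum>v\<in>X. card (N v))"
  proof (rule sum.cong)
    fix v
    have "(\<Sum>u\<in>VV. if sierp_adj n t u v then 1 else 0) = (\<Sum>u\<in>VV. if u \<in> N v then 1 else 0)"
      by (intro sum.cong) (auto simp: adjN dest: adj_sym)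
    also have "\<dots> = card (VV \<inter> N v)" using sum_ind[OF fin(1), of "N v" 1] by simp
    also have "VV \<inter> N v = N v" using nbrs_V by blast
    finally show "(\<Sum>u\<in>VV. if sierp_adj n t u v then 1 else 0) = card (N v)" .
  qed simp
  finally show ?thesis .
qed

definition "SA = (\<Sum>v\<in>A. card (N v))"
definition "SB = (\<Sum>v\<in>B. card (N v))"

lemma R_eq: "(\<Sum>u\<in>VV. rc u) = 2 * (card A + card B) + 2 * SA + SB"
proof -
  have "(\<Sum>u\<in>VV. rc u) = 2 * (\<Sum>u\<in>VV. if u \<in> A \<union> B then 1 else 0) + 2 * (\<Sum>u\<in>VV. card (N u \<inter> A))
        + (\<Sum>u\<in>VV. card (N u \<inter> B))"
    by (simp add: rc_def sum.distrib sum_distrib_left)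
  also have "(\<Sum>u\<in>VV. if u \<in> A \<union> B then 1 else 0) = card (VV \<inter> (A \<union> B))"
    using sum_ind[OF fin(1), of "A \<union> B" 1] by simp
  also have "VV \<inter> (A \<union> B) = A \<union> B" using AV BV by auto
  also have "card (A \<union> B) = card A + card B" using AB by (simp add: card_Un_disjoint)
  finally show ?thesis using dcount[OF AV] dcount[OF BV] by (simp add: SA_def SB_def)
qed

lemma SA_le: "SA \<le> n * card A"
proof -
  have "SA \<le> (\<Sum>v\<in>A. n)" unfolding SA_def
    using deg_le[where n=n and t=t] n2 AV by (intro sum_mono) auto
  then show ?thesis by (simp add: mult.commute)
qed

lemma SB_le: "SB \<le> n * card B"
proof -
  have "SB \<le> (\<Sum>v\<in>B. n)" unfolding SB_def
    using deg_le[where n=n and t=t] n2 BV by (intro sum_mono) auto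
  then show ?thesis by (simp add: mult.commute)
qed

lemma rc_ge: "u \<in> VV \<Longrightarrow> rc u \<ge> 2"
proof -
  assume u: "u \<in> VV"
  show ?thesis
  proof (cases "u \<in> A \<union> B")
    case True then show ?thesis by (simp add: rc_def)
  next
    case False
    then have g0: "g u = 0" using gvals[OF u] u by (auto simp: A_def B_def)
    then have "(\<exists>v\<in>VV. sierp_adj n t u v \<and> g v = 3) \<or>
        (\<exists>w\<in>VV. \<exists>x\<in>VV. w \<noteq> x \<and> sierp_adj n t u w \<and> sierp_adj n t u x \<and> g w = 2 \<and> g x = 2)"
      using dr u unfolding is_drdf_def by blast
    then show ?thesis
    proof
      assume "\<exists>v\<in>VV. sierp_adj n t u v \<and> g v = 3"
      then obtain v where "v \<in> VV" "sierp_adj n t u v" "g v = 3" by blast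
      then have "v \<in> N u \<inter> A" by (simp add: A_def adjN)
      then have "card (N u \<inter> A) \<ge> 1"
        by (metis One_nat_def Suc_leI card_gt_0_iff empty_iff finite_Int fin(4))
      then show ?thesis by (simp add: rc_def)
    next
      assume "\<exists>w\<in>VV. \<exists>x\<in>VV. w \<noteq> x \<and> sierp_adj n t u w \<and> sierp_adj n t u x \<and> g w = 2 \<and> g x = 2"
      then obtain w x where wx: "w\<in>VV" "x\<in>VV" "w \<noteq> x" "sierp_adj n t u w" "sierp_adj n t u x" "g w = 2" "g x = 2"
        by blast
      then have "{w, x} \<subseteq> N u \<inter> B" by (simp add: B_def adjN)
      then have "card {w, x} \<le> card (N u \<inter> B)" by (intro card_mono) auto
      then have "card (N u \<inter> B) \<ge> 2" using \<open>w \<noteq> x\<close> by simp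
      then show ?thesis by (simp add: rc_def)
    qed
  qed
qed

lemma R_ge: "(\<Sum>u\<in>VV. rc u) \<ge> 2 * n ^ t"
proof -
  have "(\<Sum>u\<in>VV. (2::nat)) \<le> (\<Sum>u\<in>VV. rc u)" by (intro sum_mono rc_ge)
  then show ?thesis by (simp add: card_V)
qed

lemma R_tight: "(\<Sum>u\<in>VV. rc u) = 2 * n ^ t \<Longrightarrow> u \<in> VV \<Longrightarrow> rc u = 2"
proof (rule ccontr)
  assume R: "(\<Sum>u\<in>VV. rc u) = 2 * n ^ t" and u: "u \<in> VV" and ne: "rc u \<noteq> 2"
  have "(\<Sum>u\<in>VV. (2::nat)) < (\<Sum>u\<in>VV. rc u)"
    proof (rule sum_strict_mono_ex1)
    show "finite VV" by simp
    show "\<forall>x\<in>VV. 2 \<le> rc x" using rc_ge by blast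
    have "2 \<le> rc u" using rc_ge[OF u] .
    then show "\<exists>a\<in>VV. 2 < rc a" using u ne by force
  qed
  then show False using R by (simp add: card_V)
qed

end


context low
begin

lemma rc_out: "u \<notin> A \<union> B \<Longrightarrow> rc u = 2 * card (N u \<inter> A) + card (N u \<inter> B)"
  by (simp add: rc_def)

lemma key:
  assumes u: "u \<in> VV" and uB: "u \<notin> B" and v: "v \<in> B" and uv: "sierp_adj n t u v" and r: "rc u = 2"
  shows "u \<notin> A \<and> card (N u \<inter> B) = 2"
proof -
  have vin: "v \<in> N u \<inter> B" using v uv by (simp add: adjN)
  have "finite (N u \<inter> B)" by simp
  then have z: "card (N u \<inter> B) \<ge> 1" using vin card_0_eq[of "N u \<inter> B"] by fastforce
  have uA: "u \<notin> A"
  proof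
    assume "u \<in> A"
    then have "rc u \<ge> 3" using z by (simp add: rc_def)
    then show False using r by simp
  qed
  then have "2 * card (N u \<inter> A) + card (N u \<inter> B) = 2" using rc_out uB r by simp
  then have "card (N u \<inter> B) = 2" using z by arith
  then show ?thesis using uA by simp
qed

lemma S3:
  assumes n3: "n \<ge> 3" and b2: "card B = 2" and r: "\<forall>u\<in>VV. rc u = 2"
  shows False
proof -
  obtain b1 b2 where B: "B = {b1, b2}" and bb: "b1 \<noteq> b2" using card_2_iff[of B] b2 by auto
  have b1V: "b1 \<in> VV" and b2V: "b2 \<in> VV" using B BV by auto
  have "rc b1 = 2" using r b1V by simp
  moreover have "b1 \<in> B" using B by simp
  ultimately have "card (N b1 \<inter> B) = 0" by (simp add: rc_def)
  then have NB: "N b1 \<inter> B = {}" by simp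
  have nadj: "\<not> sierp_adj n t b1 b2" proof
    assume "sierp_adj n t b1 b2"
    then have "b2 \<in> N b1 \<inter> B" using B by (simp add: adjN)
    then show False using NB by simp
  qed
  have com: "sierp_adj n t y b2" if y: "y \<in> N b1" for y
  proof -
    have yV: "y \<in> VV" using y nbrs_V by blast
    have yB: "y \<notin> B" using NB y by blast
    have "sierp_adj n t y b1" using y adj_sym by (simp add: adjN)
    moreover have "b1 \<in> B" using B by simp
    ultimately have "card (N y \<inter> B) = 2" using key[OF yV yB _ _ r[rule_format, OF yV]] by blast
    moreover have "N y \<inter> B \<subseteq> {b1, b2}" using B by auto
    ultimately have "N y \<inter> B = {b1, b2}" using bb card_subset_eq[of "{b1, b2}" "N y \<inter> B"]
      by simp
    then show ?thesis by (auto simp: adjN)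
  qed
  have "card (N b1) \<ge> 2" using deg_ge[OF t1 b1V] n3 by simp
  then have "N b1 \<noteq> {}" by auto
  then obtain y1 where y1: "y1 \<in> N b1" by blast
  have "card (N b1 - {y1}) \<ge> 1" using \<open>card (N b1) \<ge> 2\<close> y1 by simp
  then have "N b1 - {y1} \<noteq> {}" by (intro notI) simp
  then obtain y2 where "y2 \<in> N b1 - {y1}" by blast
  then have y: "y1 \<in> N b1" "y2 \<in> N b1" "y1 \<noteq> y2" using y1 by auto
  have "sierp_adj n t b1 b2"
  proof (rule no_C4)
    show "sierp_adj n t b1 y1" using y by (simp add: adjN)
    show "sierp_adj n t y1 b2" using com y by simp
    show "sierp_adj n t b2 y2" using com y adj_sym by blast
    show "sierp_adj n t y2 b1" using y adj_sym by (simp add: adjN)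
    show "y1 \<noteq> y2" "b1 \<noteq> b2" by fact+
  qed
  then show False using nadj by simp
qed

lemma S2:
  assumes n2': "n = 2" and bpos: "card B > 0" and r: "\<forall>u\<in>VV. rc u = 2"
    and dB: "\<forall>v\<in>B. card (N v) = 2"
  shows False
proof -
  define H where "H = B \<union> {u\<in>VV. \<exists>v\<in>B. sierp_adj n t u v}"
  have HV: "H \<subseteq> VV" using BV unfolding H_def by blast
  have "B \<noteq> {}" using bpos by (intro notI) simp
  then have Hne: "H \<noteq> {}" unfolding H_def by blast
  have degle: "card (N u) \<le> 2" if "u \<in> VV" for u using deg_le[where n=n and t=t, OF _ that] n2' by simp
  have cl: "\<forall>x\<in>H. \<forall>y. sierp_adj n t x y \<longrightarrow> y \<in> H"
  proof (intro ballI allI impI)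
    fix x y assume x: "x \<in> H" and xy: "sierp_adj n t x y"
    show "y \<in> H"
    proof (cases "x \<in> B")
      case True
      have "y \<in> VV" "sierp_adj n t y x" using xy adj_sym adj_V by blast+
      then show ?thesis using True unfolding H_def by blast
    next
      case False
      then obtain v where xV: "x \<in> VV" and v: "v \<in> B" "sierp_adj n t x v" using x unfolding H_def by blast
      have c2: "card (N x \<inter> B) = 2" using key[OF xV False v r[rule_format, OF xV]] by simp
      have "N x \<inter> B = N x"
      proof (rule card_subset_eq)
        show "finite (N x)" by simp
        show "N x \<inter> B \<subseteq> N x" by blast
        have "card (N x \<inter> B) \<le> card (N x)" by (intro card_mono) auto
        then show "card (N x \<inter> B) = card (N x)" using c2 degle[OF xV] by simp
      qed
      moreover have "y \<in> N x" using xy by (simp add: adjN)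
      ultimately have "y \<in> B" by blast
      then show ?thesis unfolding H_def by blast
    qed
  qed
  have one: "(1::nat) \<in> {1..n}" using n2' by simp
  have eH: "replicate t 1 \<in> H" using closed_ext[OF HV cl Hne one] .
  have eV: "replicate t 1 \<in> VV" using rep_V[OF one] .
  have de: "card (N (replicate t 1)) \<le> 1" using deg_le[where n=n and t=t, OF _ eV] n2' by simp
  show False
  proof (cases "replicate t 1 \<in> B")
    case True
    then have "card (N (replicate t 1)) = 2" using dB by blast
    then show False using de by simp
  next
    case False
    then obtain v where "v \<in> B" "sierp_adj n t (replicate t 1) v" using eH unfolding H_def by blast
    then have "card (N (replicate t 1) \<inter> B) = 2" using key[OF eV False _ _ r[rule_format, OF eV]] by blast
    moreover have "card (N (replicate t 1) \<inter> B) \<le> card (N (replicate t 1))" by (intro card_mono) auto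
    ultimately show False using de by simp
  qed
qed

end


lemma pow2_mod3: "(2::nat) ^ t mod 3 = 1 \<or> (2::nat) ^ t mod 3 = 2"
proof (induction t)
  case 0 then show ?case by simp
next
  case (Suc t)
  have "(2::nat) ^ Suc t mod 3 = (2 * (2 ^ t mod 3)) mod 3" by (simp add: mod_mult_right_eq)
  with Suc show ?case by auto
qed

lemma sum_eq_max: "finite S \<Longrightarrow> \<forall>x\<in>S. f x \<le> (c::nat) \<Longrightarrow> sum f S = c * card S \<Longrightarrow> x \<in> S \<Longrightarrow> f x = c"
proof (rule ccontr)
  assume fS: "finite S" and le: "\<forall>x\<in>S. f x \<le> c" and s: "sum f S = c * card S" and x: "x \<in> S" and ne: "f x \<noteq> c"
  have "sum f S < (\<Sum>x\<in>S. c)"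
  proof (rule sum_strict_mono_ex1[OF fS])
    show "\<forall>x\<in>S. f x \<le> c" by fact
    show "\<exists>a\<in>S. f a < c" using x ne le by force
  qed
  then show False using s by simp
qed

context low
begin

lemma low_n2: "n = 2 \<Longrightarrow> 3 * card A + 2 * card B \<ge> 2 ^ t + 1"
proof (rule ccontr)
  assume n: "n = 2" and "\<not> 3 * card A + 2 * card B \<ge> 2 ^ t + 1"
  then have W: "3 * card A + 2 * card B \<le> 2 ^ t" by simp
  have R1: "(\<Sum>u\<in>VV. rc u) = 2 * (card A + card B) + 2 * SA + SB" by (rule R_eq)
  have R2: "(\<Sum>u\<in>VV. rc u) \<ge> 2 * 2 ^ t" using R_ge n by simp
  have sa: "SA \<le> 2 * card A" and sb: "SB \<le> 2 * card B" using SA_le SB_le n by auto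
  have Rt: "(\<Sum>u\<in>VV. rc u) = 2 * n ^ t" using R1 R2 sa sb W n by simp
  have sbe: "SB = 2 * card B" using R1 R2 sa sb W by simp
  have Wt: "3 * card A + 2 * card B = 2 ^ t" using R1 R2 sa sb W by simp
  have bpos: "card B > 0"
  proof (rule ccontr)
    assume "\<not> card B > 0"
    then have "3 * card A = 2 ^ t" using Wt by simp
    then have "(2::nat) ^ t mod 3 = 0" by (metis mod_mult_self1_is_0)
    then show False using pow2_mod3[of t] by simp
  qed
  have dB: "\<forall>v\<in>B. card (N v) = 2"
  proof
    fix v assume v: "v \<in> B"
    show "card (N v) = 2"
    proof (rule sum_eq_max[of B "\<lambda>v. card (N v)" 2 v])
      show "finite B" by simp
      show "\<forall>x\<in>B. card (N x) \<le> 2" using deg_le[where n=n and t=t] n BV by auto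
      show "(\<Sum>v\<in>B. card (N v)) = 2 * card B" using sbe by (simp add: SB_def)
      show "v \<in> B" by fact
    qed
  qed
  have r: "\<forall>u\<in>VV. rc u = 2" using R_tight[OF Rt] by blast
  show False using S2[OF n bpos r dB] .
qed

lemma prod_facts: "int n * int (card B) \<ge> 2 * int (card B)"
  using n2 by (simp add: mult_right_mono)

lemma low_odd:
  assumes k: "n ^ t + 1 = k * (n + 1)"
  shows "3 * k \<le> 3 * card A + 2 * card B"
proof (cases "n = 2")
  case True
  then have "3 * k = 2 ^ t + 1" using k by simp
  then show ?thesis using low_n2[OF True] by simp
next
  case False
  then have n3: "n \<ge> 3" using n2 by simp
  show ?thesis
  proof (rule ccontr)
    assume "\<not> ?thesis"
    then have W: "3 * card A + 2 * card B + 1 \<le> 3 * k" by simp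
    define a where "a = int (card A)"
    define b where "b = int (card B)"
    define X where "X = int n ^ t"
    define R where "R = int (\<Sum>u\<in>VV. rc u)"
    define P where "P = int n * a"
    define Q where "Q = int n * b"
    have h1: "R \<le> 2 * a + 2 * b + 2 * P + Q"
    proof -
      have "int SA \<le> int n * int (card A)" using SA_le by (metis of_nat_le_iff of_nat_mult)
      moreover have "int SB \<le> int n * int (card B)" using SB_le by (metis of_nat_le_iff of_nat_mult)
      ultimately show ?thesis using R_eq by (simp add: R_def a_def b_def P_def Q_def)
    qed
    have h2: "2 * X \<le> R" 
    proof -
      have "int (2 * n ^ t) \<le> R" unfolding R_def using R_ge by (simp only: of_nat_le_iff)
      then show ?thesis by (simp add: X_def)
    qed
    have h3: "X + 1 = int k * int n + int k"
    proof -
      have "int (n ^ t + 1) = int (k * (n + 1))" using k by (simp only:)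
      then show ?thesis by (simp add: X_def algebra_simps)
    qed
    have h4: "3 * a + 2 * b + 1 \<le> 3 * int k" using W by (simp add: a_def b_def)
    have h5: "int (n + 1) * (3 * a + 2 * b + 1) \<le> int (n + 1) * (3 * int k)"
      by (rule mult_left_mono[OF h4]) simp
    have h5': "3 * P + 2 * Q + int n + 3 * a + 2 * b + 1 \<le> 3 * (int k * int n + int k)"
      using h5 by (simp add: P_def Q_def algebra_simps)
    have h6: "Q \<ge> 2 * b" using prod_facts by (simp add: Q_def b_def)
    have "int n \<le> 2" using h1 h2 h3 h5' h6 by (smt (verit))
    then show False using n3 by simp
  qed
qed

lemma low_even:
  assumes k: "n ^ t = k * (n + 1) + 1"
  shows "3 * k + 2 \<le> 3 * card A + 2 * card B"
proof (cases "n = 2")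
  case True
  then have "3 * k + 1 = 2 ^ t" using k by simp
  then show ?thesis using low_n2[OF True] by simp
next
  case False
  then have n3: "n \<ge> 3" using n2 by simp
  show ?thesis
  proof (rule ccontr)
    assume "\<not> ?thesis"
    then have W: "3 * card A + 2 * card B \<le> 3 * k + 1" by simp
    define a where "a = int (card A)"
    define b where "b = int (card B)"
    define X where "X = int n ^ t"
    define R where "R = int (\<Sum>u\<in>VV. rc u)"
    define P where "P = int n * a"
    define Q where "Q = int n * b"
    have h1: "R \<le> 2 * a + 2 * b + 2 * P + Q"
    proof -
      have "int SA \<le> int n * int (card A)" using SA_le by (metis of_nat_le_iff of_nat_mult)
      moreover have "int SB \<le> int n * int (card B)" using SB_le by (metis of_nat_le_iff of_nat_mult)
      ultimately show ?thesis using R_eq by (simp add: R_def a_def b_def P_def Q_def)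
    qed
    have h2: "2 * X \<le> R" 
    proof -
      have "int (2 * n ^ t) \<le> R" unfolding R_def using R_ge by (simp only: of_nat_le_iff)
      then show ?thesis by (simp add: X_def)
    qed
    have h3: "X = int k * int n + int k + 1"
    proof -
      have "int (n ^ t) = int (k * (n + 1) + 1)" using k by (simp only:)
      then show ?thesis by (simp add: X_def algebra_simps)
    qed
    have h4: "3 * a + 2 * b \<le> 3 * int k + 1" using W by (simp add: a_def b_def)
    have h5: "int (n + 1) * (3 * a + 2 * b) \<le> int (n + 1) * (3 * int k + 1)"
      by (rule mult_left_mono[OF h4]) simp
    have h5': "3 * P + 2 * Q + 3 * a + 2 * b \<le> 3 * (int k * int n + int k) + int n + 1"
      using h5 by (simp add: P_def Q_def algebra_simps)
    have h6: "Q \<ge> 2 * b" using prod_facts by (simp add: Q_def b_def)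
    have Wk: "3 * a + 2 * b = 3 * int k + 1"
    proof (rule ccontr)
      assume "3 * a + 2 * b \<noteq> 3 * int k + 1"
      then have h4': "3 * a + 2 * b \<le> 3 * int k" using h4 by simp
      have "int (n + 1) * (3 * a + 2 * b) \<le> int (n + 1) * (3 * int k)"
        by (rule mult_left_mono[OF h4']) simp
      then have "3 * P + 2 * Q + 3 * a + 2 * b \<le> 3 * (int k * int n + int k)"
        by (simp add: P_def Q_def algebra_simps)
      then show False using h1 h2 h3 h6 by (smt (verit))
    qed
    have "(int n - 2) * b \<le> (int n - 2) * 2"
    proof -
      have "Q \<le> 2 * b + 2 * int n - 4" using h1 h2 h3 h5' by (smt (verit))
      then show ?thesis by (simp add: Q_def algebra_simps)
    qed
    then have "b \<le> 2" by (rule mult_left_le_imp_le) (use n3 in simp)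
    moreover have "b \<ge> 0" by (simp add: b_def)
    ultimately have b2: "b = 2" using Wk by presburger
    then have "Q = 2 * int n" by (simp add: Q_def)
    then have "R \<le> 2 * X" using h1 h3 h5' b2 by (smt (verit))
    then have "R = 2 * X" using h2 by simp
    then have "int (\<Sum>u\<in>VV. rc u) = int (2 * n ^ t)" by (simp add: R_def X_def)
    then have Rt: "(\<Sum>u\<in>VV. rc u) = 2 * n ^ t" by (simp only: of_nat_eq_iff)
    have "card B = 2" using b2 by (simp add: b_def)
    then show False using S3[OF n3] R_tight[OF Rt] by blast
  qed
qed

end


lemma pow_mod: "(n::nat) \<ge> 1 \<Longrightarrow> n ^ t mod (n + 1) = (if even t then 1 else n)"
proof (induction t)
  case 0
  then have "1 < n + 1" by simp
  then show ?case by simp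
next
  case (Suc t)
  have e: "n ^ Suc t mod (n + 1) = (n * (n ^ t mod (n + 1))) mod (n + 1)" by (simp add: mod_mult_right_eq)
  show ?case
  proof (cases "even t")
    case True
    then show ?thesis using e Suc by simp
  next
    case False
    have nn: "n * n = 1 + (n - 1) * (n + 1)" using Suc.prems by (cases n) (auto simp: algebra_simps)
    have "n * n mod (n + 1) = (1 + (n - 1) * (n + 1)) mod (n + 1)" by (simp only: nn)
    also have "\<dots> = 1 mod (n + 1)" by (rule mod_mult_self1)
    also have "1 < n + 1" using Suc.prems by simp
    then have "1 mod (n + 1) = 1" by simp
    finally have "n * n mod (n + 1) = 1" .
    then show ?thesis using e Suc False by simp
  qed
qed

lemma no1_reduce:
  assumes dr: "is_drdf V E f"
  shows "is_drdf V E (\<lambda>v. if f v = 1 then 0 else f v)"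
proof -
  let ?g = "\<lambda>v. if f v = 1 then 0 else f v"
  have le3: "\<forall>v\<in>V. f v \<le> 3" using dr by (simp add: is_drdf_def)
  have c0: "\<forall>u\<in>V. f u = 0 \<longrightarrow>
        (\<exists>v\<in>V. E u v \<and> f v = 3) \<or>
        (\<exists>w\<in>V. \<exists>x\<in>V. w \<noteq> x \<and> E u w \<and> E u x \<and> f w = 2 \<and> f x = 2)"
    using dr by (simp add: is_drdf_def)
  have c1: "\<forall>u\<in>V. f u = 1 \<longrightarrow> (\<exists>v\<in>V. E u v \<and> f v \<ge> 3)" using dr by (simp add: is_drdf_def)
  show ?thesis unfolding is_drdf_def
  proof (intro conjI ballI impI)
    fix v assume "v \<in> V" then show "?g v \<le> 3" using le3 by simp
  next
    fix u assume u: "u \<in> V" and g0: "?g u = 0"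
    show "(\<exists>v\<in>V. E u v \<and> ?g v = 3) \<or>
        (\<exists>w\<in>V. \<exists>x\<in>V. w \<noteq> x \<and> E u w \<and> E u x \<and> ?g w = 2 \<and> ?g x = 2)"
    proof (cases "f u = 1")
      case True
      then obtain v where v: "v \<in> V" "E u v" "f v \<ge> 3" using c1 u by blast
      then have "f v = 3" using le3 by force
      then have "E u v \<and> ?g v = 3" using v by simp
      then show ?thesis using v(1) by blast
    next
      case False
      then have "f u = 0" using g0 by simp
      then show ?thesis using c0 u by force
    qed
  next
    fix u assume u: "u \<in> V" and g1: "?g u = 1"
    then show "\<exists>v\<in>V. E u v \<and> ?g v \<ge> 3" by (simp split: if_splits)
  qed
qed

lemma weight_fin: "finite V \<Longrightarrow> finite {drdf_weight V f | f. is_drdf V E f}"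
proof -
  assume fV: "finite V"
  have "\<forall>w\<in>{drdf_weight V f | f. is_drdf V E f}. w \<le> 3 * card V"
  proof
    fix w assume "w \<in> {drdf_weight V f | f. is_drdf V E f}"
    then obtain f where w: "w = drdf_weight V f" and f: "is_drdf V E f" by blast
    have "drdf_weight V f \<le> (\<Sum>v\<in>V. 3)" unfolding drdf_weight_def
      using f by (intro sum_mono) (simp add: is_drdf_def)
    then show "w \<le> 3 * card V" using w by simp
  qed
  then show ?thesis using finite_nat_set_iff_bounded_le by blast
qed

lemma lower_all:
  assumes n2: "n \<ge> 2" and t1: "t \<ge> 1" and f: "is_drdf (sierp_vertices n t) (sierp_adj n t) f"
  shows "(odd t \<longrightarrow> n ^ t + 1 = k * (n + 1) \<longrightarrow> 3 * k \<le> drdf_weight (sierp_vertices n t) f)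
       \<and> (even t \<longrightarrow> n ^ t = k * (n + 1) + 1 \<longrightarrow> 3 * k + 2 \<le> drdf_weight (sierp_vertices n t) f)"
proof -
  let ?g = "\<lambda>v. if f v = 1 then 0 else f v"
  have g: "is_drdf (sierp_vertices n t) (sierp_adj n t) ?g" by (rule no1_reduce[OF f])
  interpret L: low n t ?g
    by unfold_locales (use n2 t1 g in auto)
  have wg: "drdf_weight (sierp_vertices n t) ?g \<le> drdf_weight (sierp_vertices n t) f"
    unfolding drdf_weight_def by (intro sum_mono) simp
  have eq: "drdf_weight (sierp_vertices n t) ?g = 3 * card L.A + 2 * card L.B"
    using L.weight by (simp add: drdf_weight_def)
  show ?thesis using L.low_odd L.low_even wg eq by fastforce
qed

lemma upper_odd:
  assumes n2: "n \<ge> 2" and od: "odd t" and k: "n ^ t + 1 = k * (n + 1)"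
  shows "\<exists>f. is_drdf (sierp_vertices n t) (sierp_adj n t) f \<and> drdf_weight (sierp_vertices n t) f \<le> 3 * k"
proof -
  have one: "(1::nat) \<in> {1..n}" using n2 by simp
  let ?C = "cd n True t 1"
  have CV: "?C \<subseteq> sierp_vertices n t" and dm: "dm n t ?C {}" using cd_props[of n t] one by auto
  have cc: "int (n+1) * int (card ?C) \<le> int n ^ t + 1" using cd_card[of n t] one od by auto
  have "int (n+1) * int (card ?C) \<le> int (n + 1) * int k"
  proof -
    have "int (n ^ t + 1) = int (k * (n + 1))" using k by (simp only:)
    then show ?thesis using cc by (simp add: algebra_simps)
  qed
  then have ck: "card ?C \<le> k" by (simp add: mult_le_cancel_left)
  let ?f = "\<lambda>v. if v \<in> ?C then 3 else (0::nat)"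
  have drdf: "is_drdf (sierp_vertices n t) (sierp_adj n t) ?f"
    unfolding is_drdf_def
  proof (intro conjI ballI impI)
    fix v assume "v \<in> sierp_vertices n t" then show "?f v \<le> 3" by simp
  next
    fix u assume u: "u \<in> sierp_vertices n t" and "?f u = 0"
    then have "u \<notin> ?C" by (simp split: if_splits)
    then obtain c where c: "c \<in> ?C" "sierp_adj n t u c" using dm u by (auto simp: dm_def)
    then have "c \<in> sierp_vertices n t" "sierp_adj n t u c \<and> ?f c = 3" using CV by auto
    then show "(\<exists>v\<in>sierp_vertices n t. sierp_adj n t u v \<and> ?f v = 3) \<or>
        (\<exists>w\<in>sierp_vertices n t. \<exists>x\<in>sierp_vertices n t. w \<noteq> x \<and> sierp_adj n t u w \<and> sierp_adj n t u x \<and> ?f w = 2 \<and> ?f x = 2)"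
      by blast
  next
    fix u assume "u \<in> sierp_vertices n t" "?f u = 1"
    then show "\<exists>v\<in>sierp_vertices n t. sierp_adj n t u v \<and> ?f v \<ge> 3" by (simp split: if_splits)
  qed
  have "drdf_weight (sierp_vertices n t) ?f = 3 * card (sierp_vertices n t \<inter> ?C)"
    unfolding drdf_weight_def using sum_ind[OF finite_V, of ?C 3] by simp
  also have "sierp_vertices n t \<inter> ?C = ?C" using CV by auto
  finally show ?thesis using drdf ck by auto
qed

lemma upper_even:
  assumes n2: "n \<ge> 2" and ev: "even t" and k: "n ^ t = k * (n + 1) + 1"
  shows "\<exists>f. is_drdf (sierp_vertices n t) (sierp_adj n t) f \<and> drdf_weight (sierp_vertices n t) f \<le> 3 * k + 2"
proof -
  have one: "(1::nat) \<in> {1..n}" using n2 by simp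
  let ?C = "cd n False t 1"
  let ?e = "replicate t (1::nat)"
  have CV: "?C \<subseteq> sierp_vertices n t" and dm: "dm n t ?C {?e}" using cd_props[of n t] one ev by auto
  have cc: "int (n+1) * int (card ?C) \<le> int n ^ t - 1" using cd_card[of n t] one ev by auto
  have "int (n+1) * int (card ?C) \<le> int (n + 1) * int k"
  proof -
    have "int (n ^ t) = int (k * (n + 1) + 1)" using k by (simp only:)
    then show ?thesis using cc by (simp add: algebra_simps)
  qed
  then have ck: "card ?C \<le> k" by (simp add: mult_le_cancel_left)
  let ?f = "\<lambda>v. if v \<in> ?C then 3 else if v = ?e then 2 else (0::nat)"
  have drdf: "is_drdf (sierp_vertices n t) (sierp_adj n t) ?f"
    unfolding is_drdf_def
  proof (intro conjI ballI impI)
    fix v assume "v \<in> sierp_vertices n t" then show "?f v \<le> 3" by simp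
  next
    fix u assume u: "u \<in> sierp_vertices n t" and "?f u = 0"
    then have "u \<notin> ?C" "u \<noteq> ?e" by (simp_all split: if_splits)
    then obtain c where c: "c \<in> ?C" "sierp_adj n t u c" using dm u by (auto simp: dm_def)
    then have "c \<in> sierp_vertices n t" "sierp_adj n t u c \<and> ?f c = 3" using CV by auto
    then show "(\<exists>v\<in>sierp_vertices n t. sierp_adj n t u v \<and> ?f v = 3) \<or>
        (\<exists>w\<in>sierp_vertices n t. \<exists>x\<in>sierp_vertices n t. w \<noteq> x \<and> sierp_adj n t u w \<and> sierp_adj n t u x \<and> ?f w = 2 \<and> ?f x = 2)"
      by blast
  next
    fix u assume "u \<in> sierp_vertices n t" "?f u = 1"
    then show "\<exists>v\<in>sierp_vertices n t. sierp_adj n t u v \<and> ?f v \<ge> 3" by (simp split: if_splits)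
  qed
  have "drdf_weight (sierp_vertices n t) ?f \<le> (\<Sum>v\<in>sierp_vertices n t. (if v \<in> ?C then 3 else 0) + (if v \<in> {?e} then 2 else 0))"
    unfolding drdf_weight_def by (intro sum_mono) auto
  also have "\<dots> = 3 * card (sierp_vertices n t \<inter> ?C) + 2 * card (sierp_vertices n t \<inter> {?e})"
    by (subst sum.distrib) (simp only: sum_ind[OF finite_V])
  also have "\<dots> \<le> 3 * card ?C + 2 * 1"
    using finite_subset[OF CV finite_V]
    by (intro add_mono mult_left_mono card_mono) (auto simp: card_mono card_le_Suc0_iff_eq)
  finally show ?thesis using drdf ck by (intro exI[of _ ?f]) auto
qed

theorem theorem3p3:
  fixes n t :: nat
  assumes "n \<ge> 2" and "t \<ge> 1"
  shows "int (gamma_dR (sierp_vertices n t) (sierp_adj n t)) =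
           (if odd t then 3 * \<lceil>real (n ^ t) / real (n + 1)\<rceil>
            else 3 * \<lceil>real (n ^ t) / real (n + 1)\<rceil> - 1)"
proof -
  let ?V = "sierp_vertices n t" and ?E = "sierp_adj n t"
  let ?S = "{drdf_weight ?V f | f. is_drdf ?V ?E f}"
  have fS: "finite ?S" by (rule weight_fin[OF finite_V])
  define q where "q = n ^ t div (n + 1)"
  have qm: "n ^ t = q * (n + 1) + n ^ t mod (n + 1)" unfolding q_def by (rule div_mult_mod_eq[symmetric])
  have pm: "n ^ t mod (n + 1) = (if even t then 1 else n)" using pow_mod[of n t] assms by simp
  have gam: "gamma_dR ?V ?E = U" if
     up: "\<exists>f. is_drdf ?V ?E f \<and> drdf_weight ?V f \<le> U" and
     lo: "\<forall>f. is_drdf ?V ?E f \<longrightarrow> U \<le> drdf_weight ?V f" for U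
  proof -
    obtain f0 where f0: "is_drdf ?V ?E f0" "drdf_weight ?V f0 \<le> U" using up by blast
    have ne: "?S \<noteq> {}" using f0 by blast
    have "Min ?S \<in> ?S" using Min_in[OF fS ne] .
    then have "U \<le> Min ?S" using lo by auto
    moreover have "Min ?S \<le> drdf_weight ?V f0" using Min_le[OF fS] f0 by blast
    ultimately show ?thesis using f0 by (simp add: gamma_dR_def)
  qed
  show ?thesis
  proof (cases "odd t")
    case True
    define k where "k = q + 1"
    have k: "n ^ t + 1 = k * (n + 1)" using qm pm True by (simp add: k_def algebra_simps)
    have g: "gamma_dR ?V ?E = 3 * k"
    proof (rule gam)
      show "\<exists>f. is_drdf ?V ?E f \<and> drdf_weight ?V f \<le> 3 * k" by (rule upper_odd[OF assms(1) True k])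
      show "\<forall>f. is_drdf ?V ?E f \<longrightarrow> 3 * k \<le> drdf_weight ?V f"
        using lower_all[OF assms(1) assms(2)] True k by blast
    qed
    have "real (n ^ t + 1) = real (k * (n + 1))" using k by (simp only:)
    then have "real (n ^ t) = real k * real (n + 1) - 1" by (simp add: algebra_simps)
    then have x: "real (n ^ t) / real (n + 1) = real k - 1 / real (n + 1)"
      by (simp add: field_simps)
    have "\<lceil>real (n ^ t) / real (n + 1)\<rceil> = int k"
    proof (rule ceiling_unique)
      have "1 / real (n + 1) < 1" using assms by simp
      then show "real_of_int (int k) - 1 < real (n ^ t) / real (n + 1)" unfolding x by simp
      show "real (n ^ t) / real (n + 1) \<le> real_of_int (int k)" unfolding x by simp
    qed
    then show ?thesis using g True by simp
  next
    case False
    define k where "k = q"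
    have k: "n ^ t = k * (n + 1) + 1" using qm pm False by (simp add: k_def)
    have ev: "even t" using False by simp
    have g: "gamma_dR ?V ?E = 3 * k + 2"
    proof (rule gam)
      show "\<exists>f. is_drdf ?V ?E f \<and> drdf_weight ?V f \<le> 3 * k + 2" by (rule upper_even[OF assms(1) ev k])
      show "\<forall>f. is_drdf ?V ?E f \<longrightarrow> 3 * k + 2 \<le> drdf_weight ?V f"
        using lower_all[OF assms(1) assms(2)] ev k by blast
    qed
    have "real (n ^ t) = real (k * (n + 1) + 1)" using k by (simp only:)
    then have "real (n ^ t) = real k * real (n + 1) + 1" by (simp add: algebra_simps)
    then have x: "real (n ^ t) / real (n + 1) = real k + 1 / real (n + 1)"
      by (simp add: field_simps)
    have "\<lceil>real (n ^ t) / real (n + 1)\<rceil> = int k + 1"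
    proof (rule ceiling_unique)
      show "real_of_int (int k + 1) - 1 < real (n ^ t) / real (n + 1)" unfolding x by simp
      have "1 / real (n + 1) \<le> 1" using assms by simp
      then show "real (n ^ t) / real (n + 1) \<le> real_of_int (int k + 1)" unfolding x by simp
    qed
    then show ?thesis using g False by simp
  qed
qed

end
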